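(* The divergence problem for random walks with dynamic weights is undecidable: there is no algorithm that, given computable weight functions $W(n,n+1)$, $W(n,n-1)$ (for $n\geq1$) defining a random walk $\mathcal M$ on $\mathbb{N}$, an initial state $s_0\in\mathbb{N}$ and a finite target set $A\subseteq\mathbb{N}$, decides whether $\mathcal M$ is divergent with respect to $s_0$ and $A$.
   Context: A random walk with dynamic weights is given by computable functions $n\mapsto W(n,n+1)\in\mathbb{Q}_{>0}$ and $n\mapsto W(n,n-1)\in\mathbb{Q}_{>0}$ for $n\geq 1$; its Markov chain has state set $\mathbb{N}$, $p(0,1)=1$, and for $n>0$, $p(n,n+1)=\frac{W(n,n+1)}{W(n,n+1)+W(n,n-1)}$ and $p(n,n-1)=\frac{W(n,n-1)}{W(n,n+1)+W(n,n-1)}$. For a Markov chain $\mathcal M=(S,p)$, $Post^*_{\mathcal M}(X)$ is the set of states reachable from $X$ and $\mathbf{Pr}_{\mathcal M,s}(\mathbf{F}X)$ is the probability that the random path from $s$ ever (including time 0) is in $X$. $\mathcal M$ is divergent w.r.t. $s_0$ and $A$ if there exist computable $f_0,f_1:S\to\mathbb{R}_{\geq0}$ with: (a) for all $0<\theta<1$, $\mathbf{Pr}_{\mathcal M,s_0}(\mathbf{F}f_0^{-1}([0,\theta]))\leq\theta$; (b) for all $s$, $\mathbf{Pr}_{\mathcal M,s}(\mathbf{F}A)\leq f_1(s)$; (c) for all $0<\theta<1$, $\{s\mid f_0(s)\geq\theta\wedge f_1(s)\geq\theta\}\cap Post^*_{\mathcal M}(\{s_0\})$ is finite. *)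

theory Defs
  imports Complex_Main "HOL-Library.Nat_Bijection"
begin

datatype recf = Z | Sc | Proj nat | Comp recf "recf list" | Prim recf recf | Mn recf

inductive eval :: "recf \<Rightarrow> nat list \<Rightarrow> nat \<Rightarrow> bool" where
  eval_Z: "eval Z xs 0"
| eval_Sc: "eval Sc (x # xs) (Suc x)"
| eval_Proj: "n < length xs \<Longrightarrow> eval (Proj n) xs (xs ! n)"
| eval_Comp: "list_all2 (\<lambda>g y. eval g xs y) gs ys \<Longrightarrow> eval f ys z \<Longrightarrow> eval (Comp f gs) xs z"
| eval_Prim0: "eval f xs z \<Longrightarrow> eval (Prim f g) (0 # xs) z"
| eval_PrimS: "eval (Prim f g) (n # xs) y \<Longrightarrow> eval g (y # n # xs) z \<Longrightarrow> eval (Prim f g) (Suc n # xs) z"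
| eval_Mn: "eval f (n # xs) 0 \<Longrightarrow> (\<forall>m<n. \<exists>y. eval f (m # xs) y \<and> y \<noteq> 0) \<Longrightarrow> eval (Mn f) xs n"
monos list_all2_mono

fun recf_encode :: "recf \<Rightarrow> nat" where
  "recf_encode Z = prod_encode (0, 0)"
| "recf_encode Sc = prod_encode (1, 0)"
| "recf_encode (Proj n) = prod_encode (2, n)"
| "recf_encode (Comp f gs) = prod_encode (3, prod_encode (recf_encode f, list_encode (map recf_encode gs)))"
| "recf_encode (Prim f g) = prod_encode (4, prod_encode (recf_encode f, recf_encode g))"
| "recf_encode (Mn f) = prod_encode (5, recf_encode f)"

text \<open>A natural number v codes the positive rational a/b where (a,b) = prod_decode v, a,b > 0.\<close>
definition pos_rat_code :: "nat \<Rightarrow> bool" where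
  "pos_rat_code v \<longleftrightarrow> fst (prod_decode v) > 0 \<and> snd (prod_decode v) > 0"

definition rat_of_code :: "nat \<Rightarrow> real" where
  "rat_of_code v = real (fst (prod_decode v)) / real (snd (prod_decode v))"

definition weight_prog :: "recf \<Rightarrow> bool" where
  "weight_prog p \<longleftrightarrow> (\<forall>n. \<exists>v. eval p [n] v) \<and> (\<forall>n v. eval p [n] v \<longrightarrow> pos_rat_code v)"

definition prog_weight :: "recf \<Rightarrow> nat \<Rightarrow> real" where
  "prog_weight p n = (THE r. \<exists>v. eval p [n] v \<and> r = rat_of_code v)"

definition approx_of_code :: "nat \<Rightarrow> real" where
  "approx_of_code v = real (fst (prod_decode v)) / real (Suc (snd (prod_decode v)))"

definition computable_real_fun :: "(nat \<Rightarrow> real) \<Rightarrow> bool" where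
  "computable_real_fun f \<longleftrightarrow> (\<exists>q. \<forall>s k. (\<exists>v. eval q [s, k] v) \<and>
      (\<forall>v. eval q [s, k] v \<longrightarrow> \<bar>f s - approx_of_code v\<bar> \<le> 1 / 2 ^ k))"

definition rw_p :: "(nat \<Rightarrow> real) \<Rightarrow> (nat \<Rightarrow> real) \<Rightarrow> nat \<Rightarrow> nat \<Rightarrow> real" where
  "rw_p Wu Wd n m =
     (if n = 0 then (if m = 1 then 1 else 0)
      else if m = Suc n then Wu n / (Wu n + Wd n)
      else if m = n - 1 then Wd n / (Wu n + Wd n)
      else 0)"

fun reach_within :: "(nat \<Rightarrow> real) \<Rightarrow> (nat \<Rightarrow> real) \<Rightarrow> nat set \<Rightarrow> nat \<Rightarrow> nat \<Rightarrow> real" where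
  "reach_within Wu Wd X 0 s = (if s \<in> X then 1 else 0)"
| "reach_within Wu Wd X (Suc k) s =
     (if s \<in> X then 1
      else if s = 0 then reach_within Wu Wd X k 1
      else rw_p Wu Wd s (Suc s) * reach_within Wu Wd X k (Suc s)
         + rw_p Wu Wd s (s - 1) * reach_within Wu Wd X k (s - 1))"

definition PrF :: "(nat \<Rightarrow> real) \<Rightarrow> (nat \<Rightarrow> real) \<Rightarrow> nat \<Rightarrow> nat set \<Rightarrow> real" where
  "PrF Wu Wd s X = (SUP k. reach_within Wu Wd X k s)"

definition Post_star :: "(nat \<Rightarrow> real) \<Rightarrow> (nat \<Rightarrow> real) \<Rightarrow> nat set \<Rightarrow> nat set" where
  "Post_star Wu Wd Y = {t. \<exists>s\<in>Y. (s, t) \<in> {(a, b). rw_p Wu Wd a b > 0}\<^sup>*}"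

definition divergent :: "(nat \<Rightarrow> real) \<Rightarrow> (nat \<Rightarrow> real) \<Rightarrow> nat \<Rightarrow> nat set \<Rightarrow> bool" where
  "divergent Wu Wd s0 A \<longleftrightarrow>
     (\<exists>f0 f1. computable_real_fun f0 \<and> computable_real_fun f1 \<and>
        (\<forall>s. f0 s \<ge> 0) \<and> (\<forall>s. f1 s \<ge> 0) \<and>
        (\<forall>\<theta>. 0 < \<theta> \<and> \<theta> < 1 \<longrightarrow> PrF Wu Wd s0 {s. f0 s \<le> \<theta>} \<le> \<theta>) \<and>
        (\<forall>s. PrF Wu Wd s A \<le> f1 s) \<and>
        (\<forall>\<theta>. 0 < \<theta> \<and> \<theta> < 1 \<longrightarrow>
            finite ({s. f0 s \<ge> \<theta> \<and> f1 s \<ge> \<theta>} \<inter> Post_star Wu Wd {s0})))"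

end

theory Submission
  imports Defs
begin


lemma eval_Proj': "n < length xs \<Longrightarrow> y = xs ! n \<Longrightarrow> eval (Proj n) xs y"
  using eval_Proj by simp

fun num :: "nat \<Rightarrow> recf" where
  "num 0 = Z" | "num (Suc c) = Comp Sc [num c]"

lemma eval_num: "eval (num c) xs c"
  by (induction c) (auto intro!: eval.intros eval_Proj')

lemma eval_Comp1: "eval g xs a \<Longrightarrow> eval f [a] z \<Longrightarrow> eval (Comp f [g]) xs z"
  by (rule eval_Comp[where ys="[a]"]) auto

lemma eval_Comp2: "eval g xs a \<Longrightarrow> eval h xs b \<Longrightarrow> eval f [a,b] z \<Longrightarrow> eval (Comp f [g,h]) xs z"
  by (rule eval_Comp[where ys="[a,b]"]) auto

definition "addp = Prim (Proj 0) (Comp Sc [Proj 0])"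
lemma eval_addp: "eval addp [a, b] (a + b)"
  unfolding addp_def
proof (induction a)
  case 0 then show ?case by (auto intro!: eval.intros eval_Proj')
next
  case (Suc a)
  show ?case by (rule eval_PrimS[OF Suc]) (auto intro!: eval.intros eval_Comp1 eval_Proj')
qed

definition "mulp = Prim Z (Comp addp [Proj 0, Proj 2])"
lemma eval_mulp: "eval mulp [a, b] (a * b)"
  unfolding mulp_def
proof (induction a)
  case 0 then show ?case by (auto intro!: eval.intros eval_Proj')
next
  case (Suc a)
  have "eval (Comp addp [Proj 0, Proj 2]) [a * b, a, b] (a*b + b)"
    by (rule eval_Comp2) (auto intro: eval_addp eval.intros eval_Proj')
  then show ?case using eval_PrimS[OF Suc] by (simp add: add.commute)
qed

definition "predp = Prim Z (Proj 1)"
lemma eval_predp: "eval predp [a] (a - 1)"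
  unfolding predp_def
proof (induction a)
  case (Suc a)
  show ?case by (rule eval_PrimS[OF Suc]) (auto intro!: eval_Proj')
qed (auto intro!: eval.intros eval_Proj')

definition "sgp = Prim Z (num 1)"
lemma eval_sgp: "eval sgp [a] (if a = 0 then 0 else 1)"
  unfolding sgp_def
proof (induction a)
  case (Suc a)
  show ?case by (rule eval_PrimS[OF Suc]) (auto intro!: eval_num simp del: num.simps)
qed (auto intro!: eval.intros eval_Proj')

definition "iszp = Prim (num 1) Z"
lemma eval_iszp: "eval iszp [a] (if a = 0 then 1 else 0)"
  unfolding iszp_def
proof (induction a)
  case (Suc a)
  show ?case by (rule eval_PrimS[OF Suc]) (auto intro!: eval.intros eval_Proj')
qed (auto intro!: eval.intros eval_num simp del: num.simps)

definition "trip = Prim Z (Comp addp [Proj 0, Comp Sc [Proj 1]])"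
lemma eval_trip: "eval trip [a] (triangle a)"
  unfolding trip_def
proof (induction a)
  case 0 then show ?case by (auto intro!: eval.intros eval_Proj')
next
  case (Suc a)
  have "eval (Comp Sc [Proj 1]) [triangle a, a] (Suc a)"
    by (rule eval_Comp1) (auto intro: eval.intros eval_Proj')
  then have "eval (Comp addp [Proj 0, Comp Sc [Proj 1]]) [triangle a, a] (triangle a + Suc a)"
    by (intro eval_Comp2[OF _ _ eval_addp]) (auto intro: eval_addp eval.intros eval_Comp1 eval_Proj')
  then show ?case using eval_PrimS[OF Suc] by simp
qed

definition "Add g h = Comp addp [g, h]"
definition "Mul g h = Comp mulp [g, h]"
definition "Pred g = Comp predp [g]"
definition "Sg g = Comp sgp [g]"
definition "Isz g = Comp iszp [g]"
definition "Cond c a b = Add (Mul (Isz c) a) (Mul (Sg c) b)"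
definition "pencp = Comp addp [Comp trip [addp], Proj 0]"
definition "Penc g h = Comp pencp [g, h]"

lemma eval_Add: "eval g xs a \<Longrightarrow> eval h xs b \<Longrightarrow> eval (Add g h) xs (a + b)"
  unfolding Add_def by (rule eval_Comp2) (auto intro: eval_addp)
lemma eval_Mul: "eval g xs a \<Longrightarrow> eval h xs b \<Longrightarrow> eval (Mul g h) xs (a * b)"
  unfolding Mul_def by (rule eval_Comp2) (auto intro: eval_mulp)
lemma eval_Pred: "eval g xs a \<Longrightarrow> eval (Pred g) xs (a - 1)"
  unfolding Pred_def by (rule eval_Comp1[OF _ eval_predp])
lemma eval_Sg: "eval g xs a \<Longrightarrow> eval (Sg g) xs (if a = 0 then 0 else 1)"
  unfolding Sg_def by (rule eval_Comp1[OF _ eval_sgp])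
lemma eval_Isz: "eval g xs a \<Longrightarrow> eval (Isz g) xs (if a = 0 then 1 else 0)"
  unfolding Isz_def by (rule eval_Comp1[OF _ eval_iszp])
lemma eval_Cond: "eval c xs x \<Longrightarrow> eval a xs u \<Longrightarrow> eval b xs v \<Longrightarrow> eval (Cond c a b) xs (if x = 0 then u else v)"
proof -
  assume h: "eval c xs x" "eval a xs u" "eval b xs v"
  have "eval (Cond c a b) xs ((if x = 0 then 1 else 0) * u + (if x = 0 then 0 else 1) * v)"
    unfolding Cond_def by (intro eval_Add eval_Mul eval_Isz eval_Sg h)
  then show ?thesis by (cases "x = 0") auto
qed
lemma eval_pencp: "eval pencp [a, b] (prod_encode (a, b))"
proof -
  have "eval pencp [a, b] (triangle (a + b) + a)"
    unfolding pencp_def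
    by (rule eval_Comp2) (auto intro: eval_addp eval_trip eval_Comp1 eval.intros eval_Proj')
  then show ?thesis by (simp add: prod_encode_def)
qed
lemma eval_Penc: "eval g xs a \<Longrightarrow> eval h xs b \<Longrightarrow> eval (Penc g h) xs (prod_encode (a, b))"
  unfolding Penc_def by (rule eval_Comp2) (auto intro: eval_pencp)

definition projs :: "nat \<Rightarrow> nat \<Rightarrow> recf list" where
  "projs off n = map (\<lambda>i. Proj (i + off)) [0..<n]"

lemma eval_projs: "length ys = n \<Longrightarrow> list_all2 (\<lambda>g y. eval g (pre @ ys) y) (projs (length pre) n) ys"
  unfolding projs_def list_all2_conv_all_nth
  by (auto simp: nth_append intro!: eval_Proj')


fun primc :: "nat \<Rightarrow> (nat \<Rightarrow> nat \<Rightarrow> nat) \<Rightarrow> nat \<Rightarrow> nat" where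
  "primc a h 0 = a"
| "primc a h (Suc j) = (let r = primc a h j in if r = 0 then 0 else h (r - 1) j)"

fun st :: "(nat \<Rightarrow> nat) \<Rightarrow> nat \<Rightarrow> nat" where
  "st h 0 = 0"
| "st h (Suc j) = (let s = st h j in if s = 0 then (if h j = 0 then 1 else if h j - 1 = 0 then Suc (Suc j) else 0) else s)"

fun ceval :: "recf \<Rightarrow> nat \<Rightarrow> nat list \<Rightarrow> nat" where
  "ceval Z t xs = Suc 0"
| "ceval Sc t xs = (case xs of [] \<Rightarrow> 0 | x # _ \<Rightarrow> Suc (Suc x))"
| "ceval (Proj n) t xs = (if n < length xs then Suc (xs ! n) else 0)"
| "ceval (Comp f gs) t xs = (if 0 \<in> set (map (\<lambda>g. ceval g t xs) gs) then 0
      else ceval f t (map (\<lambda>g. ceval g t xs - 1) gs))"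
| "ceval (Prim f g) t xs = (case xs of [] \<Rightarrow> 0
      | n # ys \<Rightarrow> primc (ceval f t ys) (\<lambda>y j. ceval g t (y # j # ys)) n)"
| "ceval (Mn f) t xs = st (\<lambda>j. ceval f t (j # xs)) (Suc t) - 1"

fun allpos :: "recf list \<Rightarrow> recf" where
  "allpos [] = num 1" | "allpos (w # ws) = Mul (Sg w) (allpos ws)"

lemma eval_allpos: "list_all2 (\<lambda>g y. eval g xs y) ws vs \<Longrightarrow>
  eval (allpos ws) xs (if 0 \<in> set vs then 0 else 1)"
proof (induction ws arbitrary: vs)
  case Nil then show ?case by (auto intro: eval_num simp del: num.simps)
next
  case (Cons w ws)
  then obtain v vs' where vs: "vs = v # vs'" "eval w xs v" "list_all2 (\<lambda>g y. eval g xs y) ws vs'"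
    by (cases vs) auto
  have "eval (allpos (w # ws)) xs ((if v = 0 then 0 else 1) * (if 0 \<in> set vs' then 0 else 1))"
    using eval_Mul[OF eval_Sg[OF vs(2)] Cons.IH[OF vs(3)]] by simp
  then show ?case using vs(1) by auto
qed

fun C :: "recf \<Rightarrow> nat \<Rightarrow> recf" where
  "C Z k = num 1"
| "C Sc k = (if k = 0 then Z else Comp Sc [Comp Sc [Proj 1]])"
| "C (Proj n) k = (if n < k then Comp Sc [Proj (Suc n)] else Z)"
| "C (Comp f gs) k = Mul (allpos (map (\<lambda>g. C g k) gs))
      (Comp (C f (length gs)) (Proj 0 # map (\<lambda>g. Pred (C g k)) gs))"
| "C (Prim f g) k = (if k = 0 then Z else
      Comp (Prim (C f (k - 1)) (Mul (Sg (Proj 0))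
         (Comp (C g (Suc k)) (Proj 2 # Pred (Proj 0) # Proj 1 # projs 3 (k - 1)))))
       (Proj 1 # Proj 0 # projs 2 (k - 1)))"
| "C (Mn f) k = Pred (Comp (Prim Z
      (Cond (Proj 0)
        (Cond (Comp (C f (Suc k)) (Proj 2 # Proj 1 # projs 3 k)) (num 1)
          (Cond (Pred (Comp (C f (Suc k)) (Proj 2 # Proj 1 # projs 3 k)))
             (Comp Sc [Comp Sc [Proj 1]]) Z))
        (Proj 0)))
     (Comp Sc [Proj 0] # Proj 0 # projs 1 k))"


lemma list_all2_map_map: "(\<And>x. x \<in> set as \<Longrightarrow> P (f x) (g x)) \<Longrightarrow> list_all2 P (map f as) (map g as)"
  by (induction as) auto

lemma eval_projs': "length ys = n \<Longrightarrow> L = pre @ ys \<Longrightarrow> m = length pre \<Longrightarrow>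
  list_all2 (\<lambda>g y. eval g L y) (projs m n) ys"
  using eval_projs by blast

lemma C_correct: "length xs = k \<Longrightarrow> eval (C f k) (t # xs) (ceval f t xs)"
proof (induction f arbitrary: k xs)
  case Z
  then show ?case by (auto intro: eval_num simp del: num.simps)
next
  case Sc
  then show ?case by (cases xs) (auto intro!: eval.intros eval_Comp1 eval_Proj')
next
  case (Proj n)
  then show ?case by (auto intro!: eval.intros eval_Comp1 eval_Proj')
next
  case (Comp f gs)
  let ?vs = "map (\<lambda>g. ceval g t xs) gs"
  have A: "list_all2 (\<lambda>g y. eval g (t # xs) y) (map (\<lambda>g. C g k) gs) ?vs"
    by (rule list_all2_map_map) (use Comp in auto)
  have B: "list_all2 (\<lambda>g y. eval g (t # xs) y) (Proj 0 # map (\<lambda>g. Pred (C g k)) gs)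
            (t # map (\<lambda>g. ceval g t xs - 1) gs)"
  proof -
    have "\<And>g. g \<in> set gs \<Longrightarrow> eval (Pred (C g k)) (t # xs) (ceval g t xs - 1)"
      using eval_Pred Comp.IH(2) Comp.prems by blast
    then show ?thesis by (auto intro!: list_all2_map_map eval_Proj')
  qed
  have "eval (Comp (C f (length gs)) (Proj 0 # map (\<lambda>g. Pred (C g k)) gs)) (t # xs)
          (ceval f t (map (\<lambda>g. ceval g t xs - 1) gs))"
    by (rule eval_Comp[OF B]) (rule Comp.IH(1), simp)
  from eval_Mul[OF eval_allpos[OF A] this]
  show ?case by (cases "0 \<in> set ?vs") (simp_all only: ceval.simps C.simps if_True if_False mult_1 mult_0)
next
  case (Prim f g)
  show ?case
  proof (cases xs)
    case Nil
    then show ?thesis using Prim.prems by (auto intro: eval.intros)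
  next
    case (Cons n ys)
    have k: "k > 0" "length ys = k - 1" using Prim.prems Cons by auto
    define G where "G = Mul (Sg (Proj 0))
         (Comp (C g (Suc k)) (Proj 2 # Pred (Proj 0) # Proj 1 # projs 3 (k - 1)))"
    have inner: "eval (Prim (C f (k - 1)) G) (j # t # ys)
        (primc (ceval f t ys) (\<lambda>y j. ceval g t (y # j # ys)) j)" for j
    proof (induction j)
      case 0
      then show ?case using Prim.IH(1)[OF k(2)] by (auto intro: eval.intros)
    next
      case (Suc j)
      let ?y = "primc (ceval f t ys) (\<lambda>y j. ceval g t (y # j # ys)) j"
      have P: "eval (Pred (Proj 0)) (?y # j # t # ys) (?y - 1)"
        by (rule eval_Pred) (auto intro: eval_Proj')
      have L: "list_all2 (\<lambda>h v. eval h (?y # j # t # ys) v)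
           (Proj 2 # Pred (Proj 0) # Proj 1 # projs 3 (k - 1)) (t # (?y - 1) # j # ys)"
        using eval_projs'[of ys "k - 1" "?y # j # t # ys" "[?y, j, t]" 3] k P
        by (auto intro!: eval_Proj')
      have "eval (Comp (C g (Suc k)) (Proj 2 # Pred (Proj 0) # Proj 1 # projs 3 (k - 1)))
             (?y # j # t # ys) (ceval g t ((?y - 1) # j # ys))"
        by (rule eval_Comp[OF L]) (rule Prim.IH(2), use k in simp)
      from eval_Mul[OF eval_Sg[OF eval_Proj'[of 0 "?y # j # t # ys" ?y]] this]
      have "eval G (?y # j # t # ys) (primc (ceval f t ys) (\<lambda>y j. ceval g t (y # j # ys)) (Suc j))"
        unfolding G_def by (cases "?y = 0") (simp_all add: Let_def)
      then show ?case by (rule eval_PrimS[OF Suc])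
    qed
    have L: "list_all2 (\<lambda>h v. eval h (t # n # ys) v) (Proj 1 # Proj 0 # projs 2 (k - 1)) (n # t # ys)"
      using eval_projs'[of ys "k - 1" "t # n # ys" "[t, n]" 2] k
      by (auto intro!: eval_Proj')
    show ?thesis using eval_Comp[OF L inner[of n]] k Cons by (simp add: G_def)
  qed
next
  case (Mn f)
  define W where "W = Comp (C f (Suc k)) (Proj 2 # Proj 1 # projs 3 k)"
  define G where "G = Cond (Proj 0)
        (Cond W (num 1) (Cond (Pred W) (Comp Sc [Comp Sc [Proj 1]]) Z)) (Proj 0)"
  let ?h = "\<lambda>j. ceval f t (j # xs)"
  have inner: "eval (Prim Z G) (j # t # xs) (st ?h j)" for j
  proof (induction j)
    case 0
    then show ?case by (auto intro: eval.intros)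
  next
    case (Suc j)
    let ?s = "st ?h j"
    have L: "list_all2 (\<lambda>h v. eval h (?s # j # t # xs) v) (Proj 2 # Proj 1 # projs 3 k) (t # j # xs)"
      using eval_projs'[of xs k "?s # j # t # xs" "[?s, j, t]" 3] Mn.prems
      by (auto intro!: eval_Proj')
    have w: "eval W (?s # j # t # xs) (?h j)"
      unfolding W_def by (rule eval_Comp[OF L]) (rule Mn.IH, use Mn.prems in simp)
    have ss: "eval (Comp Sc [Comp Sc [Proj 1]]) (?s # j # t # xs) (Suc (Suc j))"
      by (auto intro!: eval_Comp1 eval.intros eval_Proj')
    have "eval G (?s # j # t # xs) (st ?h (Suc j))"
      unfolding G_def
      using eval_Cond[OF eval_Proj'[of 0 "?s # j # t # xs" ?s]
          eval_Cond[OF w eval_num[of 1] eval_Cond[OF eval_Pred[OF w] ss eval.eval_Z]]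
          eval_Proj'[of 0 "?s # j # t # xs" ?s]]
      by (simp add: Let_def del: num.simps)
    then show ?case by (rule eval_PrimS[OF Suc])
  qed
  have L: "list_all2 (\<lambda>h v. eval h (t # xs) v) (Comp Sc [Proj 0] # Proj 0 # projs 1 k) (Suc t # t # xs)"
    using eval_projs'[of xs k "t # xs" "[t]" 1] Mn.prems
    by (auto intro!: eval_Proj' eval_Comp1 eval.intros)
  show ?case using eval_Pred[OF eval_Comp[OF L inner[of "Suc t"]]]
    by (simp add: G_def W_def)
qed


lemma st_zero: "st h j = 0 \<Longrightarrow> m < j \<Longrightarrow> h m \<ge> 2"
proof (induction j arbitrary: m)
  case (Suc j)
  then show ?case by (cases "st h j = 0") (auto simp: Let_def less_Suc_eq split: if_splits)
qed simp

lemma st_found: "st h j = Suc (Suc n) \<Longrightarrow> n < j \<and> h n = 1 \<and> (\<forall>m<n. h m \<ge> 2)"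
proof (induction j)
  case (Suc j)
  show ?case
  proof (cases "st h j = 0")
    case True
    then show ?thesis using Suc.prems st_zero[OF True] by (auto simp: Let_def split: if_splits)
  next
    case False
    then show ?thesis using Suc by (auto simp: Let_def)
  qed
qed simp

lemma st_zero2: "(\<forall>m<j. h m \<ge> 2) \<Longrightarrow> st h j = 0"
  by (induction j) (auto simp: Let_def)

lemma st_hit: "(\<forall>m<n. h m \<ge> 2) \<Longrightarrow> h n = 1 \<Longrightarrow> n < j \<Longrightarrow> st h j = Suc (Suc n)"
proof (induction j)
  case (Suc j)
  show ?case
  proof (cases "n < j")
    case True
    then show ?thesis using Suc by (auto simp: Let_def)
  next
    case False
    then have "n = j" using Suc.prems by auto
    then show ?thesis using st_zero2[of j h] Suc.prems by (auto simp: Let_def)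
  qed
qed simp

lemma list_all2_map_right: "(\<And>x. x \<in> set as \<Longrightarrow> P x (g x)) \<Longrightarrow> list_all2 P as (map g as)"
  by (induction as) auto

lemma ceval_sound: "ceval f t xs = Suc v \<Longrightarrow> eval f xs v"
proof (induction f arbitrary: xs v)
  case Z
  then show ?case by (auto intro: eval.intros)
next
  case Sc
  then show ?case by (cases xs) (auto intro: eval.intros)
next
  case (Proj n)
  then show ?case by (auto intro: eval.intros split: if_splits)
next
  case (Comp f gs)
  have nz: "\<forall>g\<in>set gs. ceval g t xs \<noteq> 0" and
    fv: "ceval f t (map (\<lambda>g. ceval g t xs - 1) gs) = Suc v"
    using Comp.prems by (auto split: if_splits)
  have "list_all2 (\<lambda>g y. eval g xs y) gs (map (\<lambda>g. ceval g t xs - 1) gs)"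
  proof (rule list_all2_map_right)
    fix g assume g: "g \<in> set gs"
    then have "ceval g t xs = Suc (ceval g t xs - 1)" using nz by auto
    then show "eval g xs (ceval g t xs - 1)" by (rule Comp.IH(2)[OF g])
  qed
  then show ?case using Comp.IH(1)[OF fv] by (rule eval_Comp)
next
  case (Prim f g)
  then obtain n ys where xs: "xs = n # ys" by (cases xs) auto
  have "primc (ceval f t ys) (\<lambda>y j. ceval g t (y # j # ys)) n = Suc v \<Longrightarrow> eval (Prim f g) (n # ys) v"
    for v
  proof (induction n arbitrary: v)
    case 0
    then show ?case using Prim.IH(1) by (auto intro: eval.intros)
  next
    case (Suc n)
    let ?r = "primc (ceval f t ys) (\<lambda>y j. ceval g t (y # j # ys)) n"
    have r: "?r \<noteq> 0" "ceval g t ((?r - 1) # n # ys) = Suc v" using Suc.prems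
      by (auto simp: Let_def split: if_splits)
    have "eval (Prim f g) (n # ys) (?r - 1)" using r(1) by (intro Suc.IH) simp
    then show ?case using Prim.IH(2)[OF r(2)] by (rule eval_PrimS)
  qed
  then show ?case using Prim.prems xs by simp
next
  case (Mn f)
  let ?h = "\<lambda>j. ceval f t (j # xs)"
  have "st ?h (Suc t) = Suc (Suc v)" using Mn.prems by simp
  from st_found[OF this] have h: "?h v = 1" "\<forall>m<v. ?h m \<ge> 2" by auto
  show ?case
  proof (rule eval_Mn)
    show "eval f (v # xs) 0" using h(1) by (intro Mn.IH) simp
    show "\<forall>m<v. \<exists>y. eval f (m # xs) y \<and> y \<noteq> 0"
    proof (intro allI impI)
      fix m assume "m < v"
      then have "?h m = Suc (?h m - 1)" "?h m - 1 \<noteq> 0" using h(2) by auto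
      then show "\<exists>y. eval f (m # xs) y \<and> y \<noteq> 0" using Mn.IH by blast
    qed
  qed
qed


lemma ev_all_below: "(\<forall>m<(n::nat). \<exists>T. \<forall>t\<ge>T. P m (t::nat)) \<Longrightarrow> \<exists>T. \<forall>t\<ge>T. \<forall>m<n. P m t"
proof (induction n)
  case 0 then show ?case by simp
next
  case (Suc n)
  then obtain T1 where T1: "\<forall>t\<ge>T1. \<forall>m<n. P m t" by auto
  obtain T2 where T2: "\<forall>t\<ge>T2. P n t" using Suc.prems by auto
  show ?case by (rule exI[of _ "max T1 T2"]) (use T1 T2 less_Suc_eq in auto)
qed

lemma ev_list: "list_all2 (\<lambda>g y. \<exists>T. \<forall>t\<ge>T. ceval g t xs = Suc y) gs ys \<Longrightarrow>
  \<exists>T. \<forall>t\<ge>T. map (\<lambda>g. ceval g t xs) gs = map Suc ys"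
proof (induction gs arbitrary: ys)
  case Nil then show ?case by simp
next
  case (Cons g gs)
  then obtain y ys' where ys: "ys = y # ys'" "\<exists>T. \<forall>t\<ge>T. ceval g t xs = Suc y"
     "list_all2 (\<lambda>g y. \<exists>T. \<forall>t\<ge>T. ceval g t xs = Suc y) gs ys'"
    by (cases ys) auto
  obtain T1 where T1: "\<forall>t\<ge>T1. ceval g t xs = Suc y" using ys by auto
  obtain T2 where T2: "\<forall>t\<ge>T2. map (\<lambda>g. ceval g t xs) gs = map Suc ys'" using Cons.IH[OF ys(3)] by auto
  show ?case by (rule exI[of _ "max T1 T2"]) (use T1 T2 ys(1) in auto)
qed

lemma ceval_complete: "eval f xs v \<Longrightarrow> \<exists>T. \<forall>t\<ge>T. ceval f t xs = Suc v"
proof (induction rule: eval.induct)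
  case (eval_Z xs)
  then show ?case by simp
next
  case (eval_Sc x xs)
  then show ?case by simp
next
  case (eval_Proj n xs)
  then show ?case by simp
next
  case (eval_Comp xs gs ys f z)
  have "list_all2 (\<lambda>g y. \<exists>T. \<forall>t\<ge>T. ceval g t xs = Suc y) gs ys"
    using eval_Comp(1) by (rule list_all2_mono) auto
  from ev_list[OF this] obtain T1 where T1: "\<forall>t\<ge>T1. map (\<lambda>g. ceval g t xs) gs = map Suc ys" by auto
  obtain T2 where T2: "\<forall>t\<ge>T2. ceval f t ys = Suc z" using eval_Comp.IH by auto
  have "ceval (Comp f gs) t xs = Suc z" if "t \<ge> max T1 T2" for t
  proof -
    have m: "map (\<lambda>g. ceval g t xs) gs = map Suc ys" using T1 that by auto
    have "map (\<lambda>g. ceval g t xs - 1) gs = map (\<lambda>x. x - 1) (map (\<lambda>g. ceval g t xs) gs)" by simp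
    also have "\<dots> = ys" unfolding m by (simp add: map_idI)
    finally show ?thesis using m T2 that by (simp only: ceval.simps) auto
  qed
  then show ?case by blast
next
  case (eval_Prim0 f xs z g)
  then show ?case by simp
next
  case (eval_PrimS f g n xs y z)
  obtain T1 where T1: "\<forall>t\<ge>T1. ceval (Prim f g) t (n # xs) = Suc y" using eval_PrimS.IH(1) by auto
  obtain T2 where T2: "\<forall>t\<ge>T2. ceval g t (y # n # xs) = Suc z" using eval_PrimS.IH(2) by auto
  show ?case by (rule exI[of _ "max T1 T2"]) (use T1 T2 in \<open>auto simp: Let_def\<close>)
next
  case (eval_Mn f n xs)
  obtain T1 where T1: "\<forall>t\<ge>T1. ceval f t (n # xs) = Suc 0" using eval_Mn.IH by auto
  have "\<forall>m<n. \<exists>T. \<forall>t\<ge>T. ceval f t (m # xs) \<ge> 2"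
  proof (intro allI impI)
    fix m assume "m < n"
    then obtain y where "y \<noteq> 0" "\<exists>T. \<forall>t\<ge>T. ceval f t (m # xs) = Suc y" using eval_Mn.IH by blast
    then show "\<exists>T. \<forall>t\<ge>T. ceval f t (m # xs) \<ge> 2" by force
  qed
  from ev_all_below[OF this] obtain T2 where T2: "\<forall>t\<ge>T2. \<forall>m<n. ceval f t (m # xs) \<ge> 2" by auto
  have "ceval (Mn f) t xs = Suc n" if "t \<ge> max (max T1 T2) n" for t
  proof -
    have "st (\<lambda>j. ceval f t (j # xs)) (Suc t) = Suc (Suc n)"
      by (rule st_hit) (use T1 T2 that in auto)
    then show ?thesis by simp
  qed
  then show ?case by blast
qed

lemma eval_det: "eval f xs v \<Longrightarrow> eval f xs w \<Longrightarrow> v = w"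
proof -
  assume "eval f xs v" "eval f xs w"
  from ceval_complete[OF this(1)] ceval_complete[OF this(2)] obtain T1 T2 where
    "\<forall>t\<ge>T1. ceval f t xs = Suc v" "\<forall>t\<ge>T2. ceval f t xs = Suc w" by blast
  then have "ceval f (max T1 T2) xs = Suc v" "ceval f (max T1 T2) xs = Suc w"
    by (meson max.cobounded1 max.cobounded2)+
  then show "v = w" by simp
qed



lemma reach_Suc_pos: "s \<notin> X \<Longrightarrow> s > 0 \<Longrightarrow> reach_within Wu Wd X (Suc k) s =
   Wu s / (Wu s + Wd s) * reach_within Wu Wd X k (Suc s) + Wd s / (Wu s + Wd s) * reach_within Wu Wd X k (s - 1)"
proof -
  assume "s \<notin> X" "s > 0"
  moreover have "s - 1 \<noteq> Suc s" "s - Suc 0 \<noteq> Suc s" by arith+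
  ultimately show ?thesis by (simp add: rw_p_def)
qed

lemma reach_bounds:
  assumes pos: "\<And>n. Wu n > 0" "\<And>n. Wd n > 0"
  shows "0 \<le> reach_within Wu Wd X k s \<and> reach_within Wu Wd X k s \<le> 1"
proof (induction k arbitrary: s)
  case 0 then show ?case by simp
next
  case (Suc k)
  show ?case
  proof (cases "s \<in> X \<or> s = 0")
    case True then show ?thesis using Suc by auto
  next
    case False
    let ?p = "Wu s / (Wu s + Wd s)" and ?q = "Wd s / (Wu s + Wd s)"
    have pq: "?p \<ge> 0" "?q \<ge> 0" "?p + ?q = 1" using pos[of s] by (auto simp: add_divide_distrib[symmetric])
    let ?a = "reach_within Wu Wd X k (Suc s)" and ?b = "reach_within Wu Wd X k (s - 1)"
    have ab: "0 \<le> ?a" "?a \<le> 1" "0 \<le> ?b" "?b \<le> 1" using Suc by auto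
    have "?p * ?a + ?q * ?b \<le> ?p * 1 + ?q * 1"
      by (intro add_mono mult_left_mono) (use pq ab in auto)
    moreover have "0 \<le> ?p * ?a + ?q * ?b" using pq ab by (intro add_nonneg_nonneg mult_nonneg_nonneg)
    moreover have eq: "reach_within Wu Wd X (Suc k) s = ?p * ?a + ?q * ?b"
      by (rule reach_Suc_pos) (use False in auto)
    ultimately show ?thesis using pq(3) unfolding eq by linarith
  qed
qed

lemma reach_mono:
  assumes pos: "\<And>n. Wu n > 0" "\<And>n. Wd n > 0"
  shows "reach_within Wu Wd X k s \<le> reach_within Wu Wd X (Suc k) s"
proof (induction k arbitrary: s)
  case 0 then show ?case using reach_bounds[OF pos, where X=X and k=1 and s=s] by auto
next
  case (Suc k)
  show ?case
  proof (cases "s \<in> X \<or> s = 0")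
    case True then show ?thesis using Suc by auto
  next
    case False
    let ?p = "Wu s / (Wu s + Wd s)" and ?q = "Wd s / (Wu s + Wd s)"
    have pq: "?p \<ge> 0" "?q \<ge> 0" using pos[of s] by auto
    have "?p * reach_within Wu Wd X k (Suc s) + ?q * reach_within Wu Wd X k (s - 1)
       \<le> ?p * reach_within Wu Wd X (Suc k) (Suc s) + ?q * reach_within Wu Wd X (Suc k) (s - 1)"
      by (intro add_mono mult_left_mono Suc.IH pq)
    moreover have "reach_within Wu Wd X (Suc k) s = ?p * reach_within Wu Wd X k (Suc s) + ?q * reach_within Wu Wd X k (s - 1)"
      by (rule reach_Suc_pos) (use False in auto)
    moreover have "reach_within Wu Wd X (Suc (Suc k)) s = ?p * reach_within Wu Wd X (Suc k) (Suc s) + ?q * reach_within Wu Wd X (Suc k) (s - 1)"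
      by (rule reach_Suc_pos) (use False in auto)
    ultimately show ?thesis by simp
  qed
qed

lemma reach_lim:
  assumes pos: "\<And>n. Wu n > 0" "\<And>n. Wd n > 0"
  shows "(\<lambda>k. reach_within Wu Wd X k s) \<longlonglongrightarrow> PrF Wu Wd s X"
  unfolding PrF_def
proof (rule LIMSEQ_incseq_SUP)
  show "bdd_above (range (\<lambda>k. reach_within Wu Wd X k s))"
    by (rule bdd_aboveI[where M=1]) (use reach_bounds[where Wu=Wu and Wd=Wd, OF pos] in blast)
  show "incseq (\<lambda>k. reach_within Wu Wd X k s)"
    unfolding incseq_Suc_iff using reach_mono[where Wu=Wu and Wd=Wd, OF pos] by blast
qed

lemma PrF_bounds:
  assumes pos: "\<And>n. Wu n > 0" "\<And>n. Wd n > 0"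
  shows "0 \<le> PrF Wu Wd s X \<and> PrF Wu Wd s X \<le> 1"
proof -
  have "(\<lambda>k. reach_within Wu Wd X k s) \<longlonglongrightarrow> PrF Wu Wd s X" by (rule reach_lim[OF pos])
  then show ?thesis using reach_bounds[where Wu=Wu and Wd=Wd, OF pos]
    by (meson LIMSEQ_le_const LIMSEQ_le_const2)
qed

lemma PrF_harm:
  assumes pos: "\<And>n. Wu n > 0" "\<And>n. Wd n > 0" and s: "s \<notin> X" "s > 0"
  shows "PrF Wu Wd s X = Wu s / (Wu s + Wd s) * PrF Wu Wd (Suc s) X + Wd s / (Wu s + Wd s) * PrF Wu Wd (s - 1) X"
proof -
  have "(\<lambda>k. reach_within Wu Wd X (Suc k) s) \<longlonglongrightarrow> PrF Wu Wd s X"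
    using reach_lim[OF pos] by (rule LIMSEQ_Suc)
  moreover have "(\<lambda>k. reach_within Wu Wd X (Suc k) s) \<longlonglongrightarrow>
      Wu s / (Wu s + Wd s) * PrF Wu Wd (Suc s) X + Wd s / (Wu s + Wd s) * PrF Wu Wd (s - 1) X"
    unfolding reach_Suc_pos[OF s]
    by (intro tendsto_intros reach_lim[OF pos])
  ultimately show ?thesis using LIMSEQ_unique by blast
qed

lemma PrF_zero:
  assumes pos: "\<And>n. Wu n > 0" "\<And>n. Wd n > 0" and s: "0 \<notin> X"
  shows "PrF Wu Wd 0 X = PrF Wu Wd 1 X"
proof -
  have "(\<lambda>k. reach_within Wu Wd X (Suc k) 0) \<longlonglongrightarrow> PrF Wu Wd 0 X"
    using reach_lim[OF pos] by (rule LIMSEQ_Suc)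
  moreover have "(\<lambda>k. reach_within Wu Wd X (Suc k) 0) \<longlonglongrightarrow> PrF Wu Wd 1 X"
    using s reach_lim[OF pos] by simp
  ultimately show ?thesis using LIMSEQ_unique by blast
qed

lemma PrF_in: "s \<in> X \<Longrightarrow> PrF Wu Wd s X = 1"
proof -
  assume "s \<in> X"
  then have "reach_within Wu Wd X k s = 1" for k by (cases k) auto
  then show ?thesis unfolding PrF_def by simp
qed


lemma archi_zero: "(\<And>j::nat. \<bar>real j * c\<bar> \<le> 1) \<Longrightarrow> c = (0::real)"
proof (rule ccontr)
  assume h: "\<And>j::nat. \<bar>real j * c\<bar> \<le> 1" and c: "c \<noteq> 0"
  then have "0 < \<bar>c\<bar>" by simp
  from reals_Archimedean3[OF this] obtain n where "1 < real n * \<bar>c\<bar>" by blast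
  moreover have "\<bar>real n * c\<bar> = real n * \<bar>c\<bar>" by (simp add: abs_mult)
  ultimately show False using h[of n] by linarith
qed

abbreviation one_w :: "nat \<Rightarrow> real" where "one_w \<equiv> (\<lambda>_. 1)"

lemma sym_PrF_single: "PrF one_w one_w s {t} = 1"
proof -
  define r where "r s = PrF one_w one_w s {t}" for s
  have pos: "\<And>n::nat. (1::real) > 0" by simp
  have H: "r s = 1/2 * r (Suc s) + 1/2 * r (s - 1)" if "s \<noteq> t" "s > 0" for s
    using PrF_harm[where Wu=one_w and Wd=one_w and X="{t}" and s=s] that unfolding r_def by simp
  have Z0: "r 0 = r 1" if "t \<noteq> 0"
    using PrF_zero[where Wu=one_w and Wd=one_w and X="{t}"] that unfolding r_def by simp
  have rt: "r t = 1" unfolding r_def by (rule PrF_in) simp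
  have B: "0 \<le> r s \<and> r s \<le> 1" for s unfolding r_def by (rule PrF_bounds) simp_all
  define D where "D s = r (Suc s) - r s" for s
  have up: "D (t + j) = D t" for j
  proof (induction j)
    case (Suc j)
    have "r (Suc (t + j)) = 1/2 * r (Suc (Suc (t + j))) + 1/2 * r (t + j)"
      using H[of "Suc (t + j)"] by simp
    then show ?case using Suc by (simp add: D_def)
  qed simp
  have lin: "r (t + j) = 1 + real j * D t" for j
  proof (induction j)
    case 0 then show ?case using rt by simp
  next
    case (Suc j)
    have "r (t + Suc j) = r (t + j) + D (t + j)" by (simp add: D_def)
    then show ?case using Suc up[of j] by (simp add: algebra_simps)
  qed
  have "D t = 0"
  proof (rule archi_zero)
    fix j :: nat
    show "\<bar>real j * D t\<bar> \<le> 1" using lin[of j] B[of "t + j"] by linarith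
  qed
  then have above: "r (t + j) = 1" for j using lin by simp
  have below: "r j = 1" if "j \<le> t" for j
  proof (cases "t = 0")
    case True then show ?thesis using that rt by simp
  next
    case False
    have Dz: "D j = 0" if "j < t" for j
      using that
    proof (induction j)
      case 0 then show ?case using Z0 False by (simp add: D_def)
    next
      case (Suc j)
      have "r (Suc j) = 1/2 * r (Suc (Suc j)) + 1/2 * r j" using H[of "Suc j"] Suc.prems by simp
      then show ?case using Suc by (simp add: D_def)
    qed
    have "r j = r 0" if "j \<le> t" for j
      using that
    proof (induction j)
      case (Suc j)
      then show ?case using Dz[of j] by (simp add: D_def)
    qed simp
    then show ?thesis using that rt by (metis order_refl)
  qed
  show ?thesis
  proof (cases "s \<le> t")
    case True then show ?thesis using below r_def by simp
  next
    case False
    then have "s = t + (s - t)" by simp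
    then show ?thesis using above[of "s - t"] r_def by metis
  qed
qed


lemma reach_monoX:
  assumes pos: "\<And>n. Wu n > 0" "\<And>n. Wd n > 0" and YX: "Y \<subseteq> X"
  shows "reach_within Wu Wd Y k s \<le> reach_within Wu Wd X k s"
proof (induction k arbitrary: s)
  case 0 then show ?case using YX by auto
next
  case (Suc k)
  show ?case
  proof (cases "s \<in> X")
    case True then show ?thesis using reach_bounds[where Wu=Wu and Wd=Wd, OF pos, of Y "Suc k" s] by simp
  next
    case False
    then have nY: "s \<notin> Y" using YX by auto
    show ?thesis
    proof (cases "s = 0")
      case True then show ?thesis using False nY Suc by simp
    next
      case s0: False
      let ?p = "Wu s / (Wu s + Wd s)" and ?q = "Wd s / (Wu s + Wd s)"
      have pq: "?p \<ge> 0" "?q \<ge> 0" using pos[of s] by auto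
      have "?p * reach_within Wu Wd Y k (Suc s) + ?q * reach_within Wu Wd Y k (s - 1)
         \<le> ?p * reach_within Wu Wd X k (Suc s) + ?q * reach_within Wu Wd X k (s - 1)"
        by (intro add_mono mult_left_mono Suc.IH pq)
      moreover have "reach_within Wu Wd Y (Suc k) s = ?p * reach_within Wu Wd Y k (Suc s) + ?q * reach_within Wu Wd Y k (s - 1)"
        by (rule reach_Suc_pos) (use nY s0 in auto)
      moreover have "reach_within Wu Wd X (Suc k) s = ?p * reach_within Wu Wd X k (Suc s) + ?q * reach_within Wu Wd X k (s - 1)"
        by (rule reach_Suc_pos) (use False s0 in auto)
      ultimately show ?thesis by simp
    qed
  qed
qed

lemma PrF_monoX:
  assumes pos: "\<And>n. Wu n > 0" "\<And>n. Wd n > 0" and YX: "Y \<subseteq> X"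
  shows "PrF Wu Wd s Y \<le> PrF Wu Wd s X"
  using reach_lim[where Wu=Wu and Wd=Wd, OF pos, of Y s] reach_lim[where Wu=Wu and Wd=Wd, OF pos, of X s]
  by (rule LIMSEQ_le) (use reach_monoX[OF pos YX] in auto)

lemma sym_PrF: "t \<in> X \<Longrightarrow> PrF one_w one_w s X = 1"
proof -
  assume t: "t \<in> X"
  have "PrF one_w one_w s {t} \<le> PrF one_w one_w s X" by (rule PrF_monoX) (use t in auto)
  moreover have "PrF one_w one_w s X \<le> 1" using PrF_bounds[of one_w one_w] by simp
  ultimately show ?thesis using sym_PrF_single[of s t] by simp
qed

lemma Post_star_all:
  assumes pos: "\<And>n. Wu n > 0" "\<And>n. Wd n > 0"
  shows "s0 + j \<in> Post_star Wu Wd {s0}"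
proof -
  have "(s0, s0 + j) \<in> {(a, b). rw_p Wu Wd a b > 0}\<^sup>*"
  proof (induction j)
    case (Suc j)
    have "rw_p Wu Wd (s0 + j) (Suc (s0 + j)) > 0"
      using pos[of "s0 + j"] by (auto simp: rw_p_def intro!: divide_pos_pos add_pos_pos)
    then show ?case using Suc by (auto intro: rtrancl_into_rtrancl)
  qed simp
  then show ?thesis unfolding Post_star_def by auto
qed

lemma sym_not_divergent: "\<not> divergent one_w one_w s0 {0}"
proof
  assume "divergent one_w one_w s0 {0}"
  then obtain f0 f1 where
    a: "\<forall>\<theta>. 0 < \<theta> \<and> \<theta> < 1 \<longrightarrow> PrF one_w one_w s0 {s. f0 s \<le> \<theta>} \<le> \<theta>" and
    b: "\<forall>s. PrF one_w one_w s {0} \<le> f1 s" and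
    c: "\<forall>\<theta>. 0 < \<theta> \<and> \<theta> < 1 \<longrightarrow>
            finite ({s. f0 s \<ge> \<theta> \<and> f1 s \<ge> \<theta>} \<inter> Post_star one_w one_w {s0})"
    unfolding divergent_def by blast
  have f0: "f0 s > 1/2" for s
  proof (rule ccontr)
    assume "\<not> f0 s > 1/2"
    then have "s \<in> {s. f0 s \<le> 1/2}" by simp
    from sym_PrF[OF this, of s0] a[rule_format, of "1/2"] show False by simp
  qed
  have f1: "f1 s \<ge> 1" for s using b sym_PrF[of 0 "{0}"] by (metis singletonI)
  have "finite ({s. f0 s \<ge> 1/2 \<and> f1 s \<ge> 1/2} \<inter> Post_star one_w one_w {s0})"
    using c[rule_format, of "1/2"] by simp
  moreover have "{s0 + j | j. True} \<subseteq> {s. f0 s \<ge> 1/2 \<and> f1 s \<ge> 1/2} \<inter> Post_star one_w one_w {s0}"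
  proof
    fix x assume "x \<in> {s0 + j | j. True}"
    then obtain j where x: "x = s0 + j" by blast
    have "s0 + j \<in> Post_star one_w one_w {s0}" by (rule Post_star_all) simp_all
    moreover have "f0 x \<ge> 1/2" "f1 x \<ge> 1/2" using f0[of x] f1[of x] by linarith+
    ultimately show "x \<in> {s. f0 s \<ge> 1/2 \<and> f1 s \<ge> 1/2} \<inter> Post_star one_w one_w {s0}"
      using x by simp
  qed
  moreover have "infinite {s0 + j | j. True}"
  proof -
    have "{s0 + j | j. True} = {s0..}" by (auto intro: le_Suc_ex exI[of _ "_ - s0"])
    then show ?thesis by (simp add: infinite_Ici)
  qed
  ultimately show False using finite_subset by blast
qed


definition gb :: "nat \<Rightarrow> nat \<Rightarrow> real" where
  "gb T s = (if s \<le> T then 1 else (1/2) ^ (s - T))"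

lemma gb_le1: "gb T s \<le> 1" and gb_pos: "gb T s > 0"
  unfolding gb_def by (auto simp: power_le_one)

lemma gb_shift: "gb T (T + j) = (1/2) ^ j"
  unfolding gb_def by auto

lemma reach_gb:
  assumes W1: "\<And>n. Wu n = 1 \<or> Wu n = 2" and W2: "\<And>n. n \<ge> T \<Longrightarrow> Wu n = 2"
  shows "reach_within Wu one_w {0} k s \<le> gb T s"
proof (induction k arbitrary: s)
  case 0
  have "gb T 0 = 1" by (simp add: gb_def)
  then show ?case using gb_pos[of T s] by (cases "s = 0") simp_all
next
  case (Suc k)
  have pos: "Wu n > 0" for n using W1[of n] by auto
  show ?case
  proof (cases "s = 0")
    case True then show ?thesis by (simp add: gb_def)
  next
    case False
    let ?p = "Wu s / (Wu s + 1)" and ?q = "1 / (Wu s + 1)"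
    let ?a = "reach_within Wu one_w {0} k (Suc s)" and ?b = "reach_within Wu one_w {0} k (s - 1)"
    have eq: "reach_within Wu one_w {0} (Suc k) s = ?p * ?a + ?q * ?b"
      by (rule reach_Suc_pos) (use False in auto)
    have pq: "?p \<ge> 0" "?q \<ge> 0" "?p + ?q = 1" using pos[of s] by (auto simp: add_divide_distrib[symmetric])
    have ab: "?a \<le> gb T (Suc s)" "?b \<le> gb T (s - 1)" by (rule Suc.IH)+
    have le: "?p * ?a + ?q * ?b \<le> ?p * gb T (Suc s) + ?q * gb T (s - 1)"
      by (intro add_mono mult_left_mono ab pq)
    show ?thesis
    proof (cases "s \<le> T")
      case True
      have "?p * gb T (Suc s) + ?q * gb T (s - 1) \<le> ?p * 1 + ?q * 1"
        by (intro add_mono mult_left_mono gb_le1 pq)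
      moreover have "gb T s = 1" using True by (simp add: gb_def)
      ultimately show ?thesis using le pq(3) unfolding eq by linarith
    next
      case sT: False
      define j where "j = s - T - 1"
      have s: "s = T + Suc j" using sT unfolding j_def by simp
      have w: "Wu s = 2" using W2 sT by simp
      have g1: "gb T (Suc s) = (1/2)^(Suc (Suc j))" using gb_shift[of T "Suc (Suc j)"] s by simp
      have g2: "gb T (s - 1) = (1/2)^j" using gb_shift[of T j] s by simp
      have "?p * gb T (Suc s) + ?q * gb T (s - 1) = 2/3 * (1/2)^(Suc (Suc j)) + 1/3 * (1/2)^j"
        unfolding g1 g2 w by simp
      also have "\<dots> = (1/2) ^ Suc j" by (simp only: power_Suc) (simp add: field_simps)
      also have "\<dots> = gb T s" using gb_shift[of T "Suc j"] s by simp
      finally show ?thesis using le unfolding eq by simp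
    qed
  qed
qed


lemma reach_empty: "reach_within Wu Wd {} k s = 0"
  by (induction k arbitrary: s) auto

lemma PrF_empty: "PrF Wu Wd s {} = 0"
  unfolding PrF_def reach_empty by simp

lemma gb_bound: "gb T s \<le> real (T + 1) / real (Suc s)"
proof (cases "s \<le> T")
  case True
  then show ?thesis by (simp add: gb_def divide_simps)
next
  case False
  define j where "j = s - T"
  have s: "s = T + j" using False j_def by simp
  have "j + 1 \<le> 2 ^ j" using less_exp[of j] by (simp add: Suc_le_eq)
  then have "(T + 1) * (j + 1) \<le> (T + 1) * 2 ^ j" by (rule mult_left_mono) simp
  then have n: "T + j + 1 \<le> (T + 1) * 2 ^ j" by (simp add: algebra_simps)
  have r: "real (T + j + 1) \<le> real (T + 1) * 2 ^ j"
    using n by (metis of_nat_le_iff of_nat_mult of_nat_numeral of_nat_power)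
  have "gb T s = 1 / 2 ^ j" using gb_shift[of T j] s by (simp add: power_one_over)
  also have "\<dots> \<le> real (T + 1) / real (T + j + 1)"
    using r by (simp add: divide_simps)
  finally show ?thesis using s by simp
qed

lemma PrF_gb:
  assumes W1: "\<And>n. Wu n = 1 \<or> Wu n = 2" and W2: "\<And>n. n \<ge> T \<Longrightarrow> Wu n = 2"
  shows "PrF Wu one_w s {0} \<le> gb T s"
proof -
  have pos: "Wu n > 0" for n using W1[of n] by auto
  show ?thesis
    using reach_lim[where Wu=Wu and Wd=one_w and X="{0}" and s=s] pos
    by (intro LIMSEQ_le_const2) (auto intro: reach_gb[OF W1 W2])
qed



lemma approx_pe: "approx_of_code (prod_encode (a, b)) = real a / real (Suc b)"
  by (simp add: approx_of_code_def prod_encode_inverse)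

lemma biased_divergent:
  assumes W1: "\<And>n. Wu n = 1 \<or> Wu n = 2" and W2: "\<And>n. n \<ge> T \<Longrightarrow> Wu n = 2"
  shows "divergent Wu one_w s0 {0}"
proof -
  define f0 :: "nat \<Rightarrow> real" where "f0 = (\<lambda>s. 1)"
  define f1 :: "nat \<Rightarrow> real" where "f1 = (\<lambda>s. real (T + 1) / real (Suc s))"
  have c0: "computable_real_fun f0"
  proof -
    have "(\<exists>v. eval (num (prod_encode (1, 0))) [s, k] v) \<and>
      (\<forall>v. eval (num (prod_encode (1, 0))) [s, k] v \<longrightarrow> \<bar>f0 s - approx_of_code v\<bar> \<le> 1 / 2 ^ k)" for s k
    proof (intro conjI allI impI)
      show "\<exists>v. eval (num (prod_encode (1, 0))) [s, k] v" using eval_num by blast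
      fix v assume "eval (num (prod_encode (1, 0))) [s, k] v"
      then have "v = prod_encode (1, 0)" using eval_det[OF eval_num] by metis
      then show "\<bar>f0 s - approx_of_code v\<bar> \<le> 1 / 2 ^ k" by (simp add: approx_pe f0_def)
    qed
    then show ?thesis unfolding computable_real_fun_def by blast
  qed
  have c1: "computable_real_fun f1"
  proof -
    have "(\<exists>v. eval (Penc (num (T + 1)) (Proj 0)) [s, k] v) \<and>
      (\<forall>v. eval (Penc (num (T + 1)) (Proj 0)) [s, k] v \<longrightarrow> \<bar>f1 s - approx_of_code v\<bar> \<le> 1 / 2 ^ k)" for s k
    proof (intro conjI allI impI)
      have e: "eval (Penc (num (T + 1)) (Proj 0)) [s, k] (prod_encode (T + 1, s))"
        by (intro eval_Penc eval_num eval_Proj') auto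
      show "\<exists>v. eval (Penc (num (T + 1)) (Proj 0)) [s, k] v" using e by blast
      fix v assume "eval (Penc (num (T + 1)) (Proj 0)) [s, k] v"
      then have "v = prod_encode (T + 1, s)" using eval_det[OF e] by metis
      then show "\<bar>f1 s - approx_of_code v\<bar> \<le> 1 / 2 ^ k" by (simp add: approx_pe f1_def)
    qed
    then show ?thesis unfolding computable_real_fun_def by blast
  qed
  have a: "PrF Wu one_w s0 {s. f0 s \<le> \<theta>} \<le> \<theta>" if "0 < \<theta> \<and> \<theta> < 1" for \<theta>
  proof -
    have "{s. f0 s \<le> \<theta>} = {}" using that by (auto simp: f0_def)
    then show ?thesis using PrF_empty that by simp
  qed
  have b: "PrF Wu one_w s {0} \<le> f1 s" for s
    using PrF_gb[where Wu=Wu and T=T and s=s, OF W1 W2] gb_bound[of T s] unfolding f1_def by linarith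
  have c: "finite ({s. f0 s \<ge> \<theta> \<and> f1 s \<ge> \<theta>} \<inter> Post_star Wu one_w {s0})"
    if th: "0 < \<theta> \<and> \<theta> < 1" for \<theta>
  proof -
    let ?N = "nat \<lceil>real (T + 1) / \<theta>\<rceil>"
    have "{s. f0 s \<ge> \<theta> \<and> f1 s \<ge> \<theta>} \<subseteq> {..?N}"
    proof
      fix s assume "s \<in> {s. f0 s \<ge> \<theta> \<and> f1 s \<ge> \<theta>}"
      then have "\<theta> \<le> real (T + 1) / real (Suc s)" by (simp add: f1_def)
      then have "\<theta> * real (Suc s) \<le> real (T + 1)" by (simp add: pos_le_divide_eq)
      then have "real (Suc s) \<le> real (T + 1) / \<theta>" using th by (simp add: pos_le_divide_eq mult.commute)
      moreover have "real (T + 1) / \<theta> \<le> real ?N" by (rule real_nat_ceiling_ge)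
      moreover have "real (Suc s) = real s + 1" by simp
      ultimately have "real s \<le> real ?N" by linarith
      then show "s \<in> {..?N}" by simp
    qed
    then show ?thesis by (meson finite_Int finite_atMost finite_subset)
  qed
  show ?thesis unfolding divergent_def
    by (rule exI[of _ f0], rule exI[of _ f1]) (use c0 c1 a b c in \<open>auto simp: f0_def f1_def\<close>)
qed



definition "Eprog = Prim Z (Penc (num 3) (Penc (num (recf_encode Sc)) (Comp Sc [Penc (Proj 0) (num 0)])))"

lemma eval_Eprog: "eval Eprog [x] (recf_encode (num x))"
  unfolding Eprog_def
proof (induction x)
  case 0
  have "recf_encode Z = 0" by (simp add: prod_encode_def)
  then show ?case by (auto intro: eval.intros)
next
  case (Suc x)
  let ?L = "[recf_encode (num x), x]"
  have "eval (Penc (Proj 0) (num 0)) ?L (prod_encode (recf_encode (num x), 0))"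
    by (intro eval_Penc eval_num eval_Proj') auto
  then have "eval (Comp Sc [Penc (Proj 0) (num 0)]) ?L (Suc (prod_encode (recf_encode (num x), 0)))"
    by (rule eval_Comp1) (rule eval_Sc)
  then have "eval (Penc (num 3) (Penc (num (recf_encode Sc)) (Comp Sc [Penc (Proj 0) (num 0)]))) ?L
     (prod_encode (3, prod_encode (recf_encode Sc, Suc (prod_encode (recf_encode (num x), 0)))))"
    by (intro eval_Penc eval_num)
  moreover have "prod_encode (3, prod_encode (recf_encode Sc, Suc (prod_encode (recf_encode (num x), 0))))
      = recf_encode (num (Suc x))" by simp
  ultimately show ?case using eval_PrimS[OF Suc] by simp
qed

definition "SelfCode = Penc (num 3) (Penc (Proj 0) (Comp Sc [Penc (Comp Eprog [Proj 0])
    (Comp Sc [Penc (num (recf_encode (Proj 0))) (num 0)])]))"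

lemma eval_SelfCode: "eval SelfCode [recf_encode Mx, n] (recf_encode (Comp Mx [num (recf_encode Mx), Proj 0]))"
proof -
  let ?m = "recf_encode Mx"
  let ?L = "[?m, n]"
  have e1: "eval (Comp Eprog [Proj 0]) ?L (recf_encode (num ?m))"
    by (rule eval_Comp1[OF _ eval_Eprog]) (auto intro: eval_Proj')
  have "eval (Penc (num (recf_encode (Proj 0))) (num 0)) ?L (prod_encode (recf_encode (Proj 0), 0))"
    by (intro eval_Penc eval_num)
  then have e2: "eval (Comp Sc [Penc (num (recf_encode (Proj 0))) (num 0)]) ?L (Suc (prod_encode (recf_encode (Proj 0), 0)))"
    by (rule eval_Comp1) (rule eval_Sc)
  have "eval (Penc (Comp Eprog [Proj 0]) (Comp Sc [Penc (num (recf_encode (Proj 0))) (num 0)])) ?L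
     (prod_encode (recf_encode (num ?m), Suc (prod_encode (recf_encode (Proj 0), 0))))"
    by (rule eval_Penc[OF e1 e2])
  then have e3: "eval (Comp Sc [Penc (Comp Eprog [Proj 0]) (Comp Sc [Penc (num (recf_encode (Proj 0))) (num 0)])]) ?L
     (Suc (prod_encode (recf_encode (num ?m), Suc (prod_encode (recf_encode (Proj 0), 0)))))"
    by (rule eval_Comp1) (rule eval_Sc)
  have "eval SelfCode ?L (prod_encode (3, prod_encode (?m,
      Suc (prod_encode (recf_encode (num ?m), Suc (prod_encode (recf_encode (Proj 0), 0)))))))"
    unfolding SelfCode_def
    by (intro eval_Penc eval_num e3) (auto intro: eval_Proj')
  moreover have "prod_encode (3, prod_encode (?m,
      Suc (prod_encode (recf_encode (num ?m), Suc (prod_encode (recf_encode (Proj 0), 0))))))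
      = recf_encode (Comp Mx [num ?m, Proj 0])"
    by (simp del: recf_encode.simps(3)) 
  ultimately show ?thesis by simp
qed


definition "c4 = prod_encode (1, 1)"
definition "c8 = prod_encode (2, 1)"

lemma pos_rat_pe: "a > 0 \<Longrightarrow> b > 0 \<Longrightarrow> pos_rat_code (prod_encode (a, b))"
  by (simp add: pos_rat_code_def prod_encode_inverse)

lemma rat_pe: "rat_of_code (prod_encode (a, b)) = real a / real b"
  by (simp add: rat_of_code_def prod_encode_inverse)

lemma weight_prog_det:
  assumes "\<And>n. eval p [n] (w n)" "\<And>n. pos_rat_code (w n)"
  shows "weight_prog p" "prog_weight p = (\<lambda>n. rat_of_code (w n))"
proof -
  show "weight_prog p" unfolding weight_prog_def
    using assms eval_det by metis
  show "prog_weight p = (\<lambda>n. rat_of_code (w n))"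
  proof
    fix n
    show "prog_weight p n = rat_of_code (w n)"
      unfolding prog_weight_def
      by (rule the_equality) (use assms(1) eval_det in blast)+
  qed
qed

theorem theorem1:
  shows "\<not> (\<exists>d. \<forall>pu pd s0 A.
            weight_prog pu \<and> weight_prog pd \<and> finite A \<longrightarrow>
            eval d [recf_encode pu, recf_encode pd, s0, set_encode A]
              (if divergent (prog_weight pu) (prog_weight pd) s0 A then 1 else 0))"
proof
  assume "\<exists>d. \<forall>pu pd s0 A.
            weight_prog pu \<and> weight_prog pd \<and> finite A \<longrightarrow>
            eval d [recf_encode pu, recf_encode pd, s0, set_encode A]
              (if divergent (prog_weight pu) (prog_weight pd) s0 A then 1 else 0)"
  then obtain d where H: "\<And>pu pd s0 A. weight_prog pu \<Longrightarrow> weight_prog pd \<Longrightarrow> finite A \<Longrightarrow>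
            eval d [recf_encode pu, recf_encode pd, s0, set_encode A]
              (if divergent (prog_weight pu) (prog_weight pd) s0 A then 1 else 0)" by blast
  define pd where "pd = num c4"
  define W where "W = Comp (C d 4) [Proj 1, SelfCode, num (recf_encode pd), num 0, num (set_encode {0})]"
  define M where "M = Cond W (num c4) (Cond (Pred W) (num c8) (num c4))"
  define pu where "pu = Comp M [num (recf_encode M), Proj 0]"
  define X where "X = [recf_encode pu, recf_encode pd, 0, set_encode {0}]"
  define wv where "wv n = (if ceval d n X = 1 then c8 else c4)" for n
  have evpu: "eval pu [n] (wv n)" for n
  proof -
    let ?L = "[recf_encode M, n]"
    have sc: "eval SelfCode ?L (recf_encode pu)" unfolding pu_def by (rule eval_SelfCode)
    have "list_all2 (\<lambda>g y. eval g ?L y) [Proj 1, SelfCode, num (recf_encode pd), num 0, num (set_encode {0})]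
          (n # X)"
      unfolding X_def using sc by (auto intro!: eval_Proj' eval_num simp del: num.simps)
    then have w: "eval W ?L (ceval d n X)" unfolding W_def
      by (rule eval_Comp) (rule C_correct, simp add: X_def)
    have "eval M ?L (if ceval d n X = 0 then c4 else if ceval d n X - 1 = 0 then c8 else c4)"
      using eval_Cond[OF w eval_num eval_Cond[OF eval_Pred[OF w] eval_num eval_num]]
      unfolding M_def by simp
    moreover have "(if ceval d n X = 0 then c4 else if ceval d n X - 1 = 0 then c8 else c4) = wv n"
      unfolding wv_def by (cases "ceval d n X = 0"; cases "ceval d n X = 1") auto
    ultimately have m: "eval M ?L (wv n)" by simp
    show ?thesis unfolding pu_def
      by (rule eval_Comp2[OF eval_num _ m]) (auto intro: eval_Proj')
  qed
  have posw: "pos_rat_code (wv n)" for n unfolding wv_def c4_def c8_def by (auto intro: pos_rat_pe)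
  have wpu: "weight_prog pu" and Wu: "prog_weight pu = (\<lambda>n. rat_of_code (wv n))"
    using weight_prog_det[of pu wv, OF evpu posw] by auto
  have e4: "eval pd [n] c4" for n unfolding pd_def by (rule eval_num)
  have p4: "pos_rat_code c4" unfolding c4_def by (rule pos_rat_pe) auto
  have wpd: "weight_prog pd" and Wd: "prog_weight pd = one_w"
    using weight_prog_det[of pd "\<lambda>_. c4", OF e4 p4] by (auto simp: c4_def rat_pe)
  let ?Wu = "\<lambda>n. rat_of_code (wv n)"
  have r1: "?Wu n = 1 \<or> ?Wu n = 2" for n unfolding wv_def c4_def c8_def by (auto simp: rat_pe)
  let ?r = "if divergent ?Wu one_w 0 {0} then 1 else (0::nat)"
  have ev: "eval d X ?r" using H[OF wpu wpd, of "{0}" 0] unfolding X_def Wu Wd by simp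
  from ceval_complete[OF ev] obtain T where T: "\<And>t. t \<ge> T \<Longrightarrow> ceval d t X = Suc ?r" by blast
  show False
  proof (cases "divergent ?Wu one_w 0 {0}")
    case True
    have "ceval d n X \<noteq> 1" for n
    proof
      assume "ceval d n X = 1"
      then have "eval d X 0" using ceval_sound[of d n X 0] by simp
      with ev True show False using eval_det by fastforce
    qed
    then have "?Wu = one_w" unfolding wv_def c4_def by (auto simp: rat_pe)
    then show False using True sym_not_divergent[of 0] by simp
  next
    case False
    have "?Wu n = 2" if "n \<ge> T" for n using T[OF that] False unfolding wv_def c8_def by (simp add: rat_pe)
    then have "divergent ?Wu one_w 0 {0}" using biased_divergent[of ?Wu T 0] r1 by blast
    then show False using False by simp
  qed
qed


end
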